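(* There is an absolute constant $c > 0$ such that the following holds for all integers $r \ge 2$ and $M > r$. For every streaming algorithm that maintains a stratified random sample over a stream with $r$ strata using a memory of $M$ records, there exists an input stream such that, after processing it, the variance $V$ of the algorithm's stratified random sample satisfies $V \ge c\cdot r\cdot V^*$, where $V^*$ is the optimal (smallest) variance achievable by any stratified random sample of the same stream using memory of $M$ records. In other words, in the worst case, any such streaming algorithm has multiplicative error $\Omega(r)$ relative to the optimal variance.
   Context: A stream is a sequence of real values, each labeled with a stratum in $\{1,\dots,r\}$. After a prefix of the stream has been seen, let $n_i$ be the number of elements of stratum $i$ seen, $n = \sum_i n_i$, and $\sigma_i$ the population standard deviation of the values of stratum $i$ seen. A streaming algorithm processes the elements one at a time, can store at most $M$ elements at any time, and cannot access an element later unless it is currently stored; at every time it holds, for each stratum $i$, a sample $S_i$ (of size $s_i$) chosen uniformly at random without replacement from the elements of stratum $i$ seen so far, with $\sum_i s_i \le M$. The variance of its sample is $V = \frac{1}{n^2}\sum_i \frac{n_i^2\sigma_i^2}{s_i} - \frac{1}{n^2}\sum_i n_i\sigma_i^2$. $V^*$ is the minimum of this expression over all per-stratum sample sizes $0\le s_i \le n_i$ with $\sum_i s_i = M$ (i.e. the variance of a variance-optimal offline stratified random sample of the whole stream seen so far with memory $M$). *)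

theory Defs
  imports "HOL-Probability.Probability"
begin

text \<open>A stream: list of (value, stratum label) pairs. Elements are identified by their
  position in the stream (0-based).\<close>
type_synonym stream = "(real \<times> nat) list"

text \<open>State of a streaming algorithm after processing a prefix: the set of stored
  stream positions, and for every stratum i the sample S_i (a set of positions).\<close>
type_synonym alg_state = "nat set \<times> (nat \<Rightarrow> nat set)"

text \<open>A run: the state after processing t elements, for t = 0, 1, ..., length of stream.\<close>
type_synonym run = "nat \<Rightarrow> alg_state"

definition valid_stream :: "nat \<Rightarrow> stream \<Rightarrow> bool" where
  "valid_stream r xs \<longleftrightarrow> (\<forall>p\<in>set xs. snd p \<in> {1..r})"

definition stratum_vals :: "stream \<Rightarrow> nat \<Rightarrow> real list" where
  "stratum_vals xs i = map fst (filter (\<lambda>p. snd p = i) xs)"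

definition stratum_count :: "stream \<Rightarrow> nat \<Rightarrow> nat" where
  "stratum_count xs i = length (stratum_vals xs i)"

text \<open>Population standard deviation of the values of stratum i (0 if the stratum is empty).\<close>
definition stratum_sd :: "stream \<Rightarrow> nat \<Rightarrow> real" where
  "stratum_sd xs i =
     (let ys = stratum_vals xs i; m = sum_list ys / real (length ys)
      in sqrt (sum_list (map (\<lambda>y. (y - m)^2) ys) / real (length ys)))"

text \<open>Variance of a stratified random sample with per-stratum sizes s i:
  (1/n^2) * sum_i n_i^2 sigma_i^2 / s_i - (1/n^2) * sum_i n_i sigma_i^2.
  If some stratum with positive n_i sigma_i^2 gets no sample, the variance is infinite.
  (For s_i = 0 and n_i sigma_i^2 = 0 the term 0/0 is read as 0.)\<close>
definition srs_variance :: "nat \<Rightarrow> stream \<Rightarrow> (nat \<Rightarrow> nat) \<Rightarrow> ennreal" where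
  "srs_variance r xs s =
     (let n = real (length xs);
          ni = (\<lambda>i. real (stratum_count xs i));
          \<sigma> = stratum_sd xs
      in if \<exists>i\<in>{1..r}. s i = 0 \<and> ni i * (\<sigma> i)^2 \<noteq> 0 then \<top>
         else ennreal ((1 / n^2) * (\<Sum>i=1..r. (ni i)^2 * (\<sigma> i)^2 / real (s i))
                       - (1 / n^2) * (\<Sum>i=1..r. ni i * (\<sigma> i)^2)))"

definition opt_variance :: "nat \<Rightarrow> nat \<Rightarrow> stream \<Rightarrow> ennreal" where
  "opt_variance r M xs =
     (INF s \<in> {s. (\<forall>i\<in>{1..r}. s i \<le> stratum_count xs i) \<and> (\<Sum>i=1..r. s i) = M}.
        srs_variance r xs s)"

definition stratum_positions :: "stream \<Rightarrow> nat \<Rightarrow> nat \<Rightarrow> nat set" where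
  "stratum_positions xs i t = {k. k < t \<and> k < length xs \<and> snd (xs ! k) = i}"

definition prefix_run :: "nat \<Rightarrow> run \<Rightarrow> run" where
  "prefix_run t \<rho> = (\<lambda>k. if k \<le> t then \<rho> k else ({}, \<lambda>_. {}))"

text \<open>A (randomized) streaming algorithm with r strata and memory M, given as the
  distribution of its run on each stream.  Conditions:
  (1) online: the distribution of the run up to time t depends only on the first t elements;
  (2) at every time t at most M elements are stored, only seen elements are stored, and an
      element not stored at time t can never be stored later (stored(t+1) is a subset of
      stored(t) plus the new element t);
  (3) each sample S_i consists of stored elements of stratum i seen so far, and the total
      sample size is at most M;
  (4) S_i is uniform without replacement given its size: any two subsets of the stratum-i
      elements seen so far of equal cardinality are equally likely as S_i.\<close>
definition stratified_streaming_alg :: "nat \<Rightarrow> nat \<Rightarrow> (stream \<Rightarrow> run pmf) \<Rightarrow> bool" where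
  "stratified_streaming_alg r M A \<longleftrightarrow>
     (\<forall>xs ys t. valid_stream r xs \<and> valid_stream r ys \<and> t \<le> length xs \<and> t \<le> length ys
         \<and> take t xs = take t ys
         \<longrightarrow> map_pmf (prefix_run t) (A xs) = map_pmf (prefix_run t) (A ys)) \<and>
     (\<forall>xs. valid_stream r xs \<longrightarrow>
        (\<forall>\<rho>\<in>set_pmf (A xs). \<forall>t\<le>length xs.
            fst (\<rho> t) \<subseteq> {..<t} \<and> card (fst (\<rho> t)) \<le> M \<and>
            (t < length xs \<longrightarrow> fst (\<rho> (Suc t)) \<subseteq> fst (\<rho> t) \<union> {t}) \<and>
            (\<forall>i\<in>{1..r}. snd (\<rho> t) i \<subseteq> fst (\<rho> t) \<inter> stratum_positions xs i t) \<and>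
            (\<Sum>i=1..r. card (snd (\<rho> t) i)) \<le> M) \<and>
        (\<forall>t\<le>length xs. \<forall>i\<in>{1..r}. \<forall>B C.
            B \<subseteq> stratum_positions xs i t \<and> C \<subseteq> stratum_positions xs i t \<and> card B = card C
            \<longrightarrow> measure_pmf.prob (A xs) {\<rho>. snd (\<rho> t) i = B}
                = measure_pmf.prob (A xs) {\<rho>. snd (\<rho> t) i = C}))"

definition alg_variance :: "nat \<Rightarrow> stream \<Rightarrow> run \<Rightarrow> ennreal" where
  "alg_variance r xs \<rho> = srs_variance r xs (\<lambda>i. card (snd (\<rho> (length xs)) i))"

end

theory Submission
  imports Defs
begin


lemma comb_lemma:
  fixes q :: "nat set \<Rightarrow> real"
  assumes fin: "finite P" and ObP: "Ob \<subseteq> P"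
    and inv: "\<And>B C. B \<subseteq> P \<Longrightarrow> C \<subseteq> P \<Longrightarrow> card B = card C \<Longrightarrow> q B = q C"
  shows "real (card P) * (\<Sum>B\<in>Pow P. q B * real (card (B \<inter> Ob)))
       = real (card Ob) * (\<Sum>B\<in>Pow P. q B * real (card B))"
proof -
  define h where "h x = (\<Sum>B\<in>{B\<in>Pow P. x \<in> B}. q B)" for x
  have finO: "finite Ob" using fin ObP finite_subset by blast
  have cardsum: "\<And>X B. finite B \<Longrightarrow> X \<subseteq> P \<Longrightarrow> B \<subseteq> P \<Longrightarrow> real (card (B \<inter> X)) = (\<Sum>x\<in>X. if x \<in> B then 1 else 0)"
  proof -
    fix X B :: "nat set" assume "finite B" "X \<subseteq> P" "B \<subseteq> P"
    then have fX: "finite X" using fin finite_subset by blast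
    have "(\<Sum>x\<in>X. if x \<in> B then 1 else (0::real)) = (\<Sum>x\<in>X \<inter> B. 1)"
      using fX by (simp add: sum.If_cases Int_commute)
    then show "real (card (B \<inter> X)) = (\<Sum>x\<in>X. if x \<in> B then 1 else 0)"
      by (simp add: Int_commute)
  qed
  have swap: "\<And>X. X \<subseteq> P \<Longrightarrow> (\<Sum>B\<in>Pow P. q B * real (card (B \<inter> X))) = (\<Sum>x\<in>X. h x)"
  proof -
    fix X assume XP: "X \<subseteq> P"
    have fX: "finite X" using fin XP finite_subset by blast
    have "(\<Sum>B\<in>Pow P. q B * real (card (B \<inter> X))) = (\<Sum>B\<in>Pow P. \<Sum>x\<in>X. if x \<in> B then q B else 0)"
      apply (rule sum.cong, simp)
      apply (subst cardsum[OF _ XP])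
      using fin finite_subset apply auto[2]
      by (simp add: sum_distrib_left if_distrib cong: if_cong)
    also have "\<dots> = (\<Sum>x\<in>X. \<Sum>B\<in>Pow P. if x \<in> B then q B else 0)"
      by (rule sum.swap)
    also have "\<dots> = (\<Sum>x\<in>X. h x)"
      unfolding h_def
      by (rule sum.cong[OF refl], rule sum.inter_filter[symmetric]) (simp add: fin)
    finally show "(\<Sum>B\<in>Pow P. q B * real (card (B \<inter> X))) = (\<Sum>x\<in>X. h x)" .
  qed
  have hconst: "h x = h y" if xP: "x \<in> P" and yP: "y \<in> P" for x y
  proof -
    define \<tau> where "\<tau> z = (if z = x then y else if z = y then x else z)" for z
    have tt: "\<tau> (\<tau> z) = z" for z unfolding \<tau>_def by auto
    have inj: "inj \<tau>" by (metis tt injI)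
    have tP: "\<tau> ` P \<subseteq> P" using xP yP unfolding \<tau>_def by auto
    have im: "\<And>B. \<tau> ` (\<tau> ` B) = B" by (simp add: image_comp tt)
    show ?thesis unfolding h_def
    proof (rule sum.reindex_bij_witness[where i="(`) \<tau>" and j="(`) \<tau>"])
      fix B assume "B \<in> {B \<in> Pow P. y \<in> B}"
      then show "\<tau> ` \<tau> ` B = B" by (simp add: im)
    next
      fix B assume B: "B \<in> {B \<in> Pow P. y \<in> B}"
      have "\<tau> y = x" unfolding \<tau>_def by simp
      then have "x \<in> \<tau> ` B" using B by (metis (mono_tags) CollectD imageI)
      moreover have "\<tau> ` B \<subseteq> P" using B tP by blast
      ultimately show "\<tau> ` B \<in> {B \<in> Pow P. x \<in> B}" by simp
    next
      fix B assume "B \<in> {B \<in> Pow P. x \<in> B}"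
      then show "\<tau> ` \<tau> ` B = B" by (simp add: im)
    next
      fix B assume B: "B \<in> {B \<in> Pow P. x \<in> B}"
      have "\<tau> x = y" unfolding \<tau>_def by simp
      then have "y \<in> \<tau> ` B" using B by (metis (mono_tags) CollectD imageI)
      moreover have "\<tau> ` B \<subseteq> P" using B tP by blast
      ultimately show "\<tau> ` B \<in> {B \<in> Pow P. y \<in> B}" by simp
    next
      fix B assume B: "B \<in> {B \<in> Pow P. x \<in> B}"
      have "card (\<tau> ` B) = card B" using inj by (simp add: card_image inj_on_subset)
      moreover have "\<tau> ` B \<subseteq> P" using B tP by auto
      ultimately show "q (\<tau> ` B) = q B" using B by (intro inv) auto
    qed
  qed
  show ?thesis
  proof (cases "P = {}")
    case True then show ?thesis using ObP by simp
  next
    case False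
    then obtain x0 where x0: "x0 \<in> P" by blast
    have "(\<Sum>x\<in>Ob. h x) = (\<Sum>x\<in>Ob. h x0)"
      by (rule sum.cong[OF refl]) (use hconst x0 ObP in blast)
    then have e1: "(\<Sum>x\<in>Ob. h x) = real (card Ob) * h x0" by simp
    have "(\<Sum>x\<in>P. h x) = (\<Sum>x\<in>P. h x0)"
      by (rule sum.cong[OF refl]) (use hconst x0 in blast)
    then have e2: "(\<Sum>x\<in>P. h x) = real (card P) * h x0" by simp
    have "(\<Sum>B\<in>Pow P. q B * real (card B)) = (\<Sum>B\<in>Pow P. q B * real (card (B \<inter> P)))"
      by (rule sum.cong) (auto simp: Int_absorb2)
    then show ?thesis using swap[OF ObP] swap[of P] e1 e2 by simp
  qed
qed



definition pre :: "nat \<Rightarrow> nat \<Rightarrow> stream" where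
  "pre r M = concat (map (\<lambda>k. replicate M (0::real, k)) [1..<Suc r])"

definition xsj :: "nat \<Rightarrow> nat \<Rightarrow> nat \<Rightarrow> stream" where
  "xsj r M j = pre r M @ replicate M (1::real, j)"

lemma length_pre[simp]: "length (pre r M) = r * M"
  by (induction r) (auto simp: pre_def)

lemma set_pre: "set (pre r M) \<subseteq> {(0, k) | k. k \<in> {1..r}}"
  by (induction r) (auto simp: pre_def)

lemma filter_pre: "i \<in> {1..r} \<Longrightarrow> filter (\<lambda>p. snd p = i) (pre r M) = replicate M (0, i)"
proof (induction r)
  case 0 then show ?case by simp
next
  case (Suc r)
  have e: "pre (Suc r) M = pre r M @ replicate M (0, Suc r)" by (simp add: pre_def)
  show ?case
  proof (cases "i = Suc r")
    case True
    have "filter (\<lambda>p. snd p = i) (pre r M) = []"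
      using set_pre[of r M] True by (auto simp: filter_empty_conv)
    then show ?thesis using True e by simp
  next
    case False
    then have "i \<in> {1..r}" using Suc.prems by auto
    then show ?thesis using Suc.IH False e by (simp add: filter_replicate)
  qed
qed

lemma valid_pre: "valid_stream r (pre r M)"
  using set_pre[of r M] unfolding valid_stream_def by auto

lemma valid_xsj: "j \<in> {1..r} \<Longrightarrow> valid_stream r (xsj r M j)"
  using set_pre[of r M] unfolding valid_stream_def xsj_def by auto

lemma length_xsj[simp]: "length (xsj r M j) = r * M + M"
  by (simp add: xsj_def)

lemma vals_xsj:
  assumes "i \<in> {1..r}" "j \<in> {1..r}"
  shows "stratum_vals (xsj r M j) i = (if i = j then replicate M 0 @ replicate M 1 else replicate M 0)"
  using filter_pre[OF assms(1), of M] assms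
  by (auto simp: stratum_vals_def xsj_def filter_replicate)

lemma sd_zero: "stratum_vals xs i = replicate M 0 \<Longrightarrow> stratum_sd xs i = 0"
  by (simp add: stratum_sd_def Let_def sum_list_replicate)

lemma sd_half:
  assumes "stratum_vals xs i = replicate M 0 @ replicate M 1" "M > 0"
  shows "stratum_sd xs i = 1/2"
proof -
  have m: "sum_list (replicate M (0::real) @ replicate M 1) / real (length (replicate M (0::real) @ replicate M 1)) = 1/2"
    using assms(2) by (simp add: sum_list_replicate)
  have "map (\<lambda>y. (y - 1/2)^2) (replicate M (0::real) @ replicate M 1) = replicate (2*M) (1/4)"
    by (simp add: replicate_add[symmetric] mult_2 power2_eq_square)
  then have "sum_list (map (\<lambda>y. (y - 1/2)^2) (replicate M (0::real) @ replicate M 1)) / real (length (replicate M (0::real) @ replicate M 1)) = 1/4"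
    using assms(2) by (simp add: sum_list_replicate)
  then have "stratum_sd xs i = sqrt (1/4)"
    unfolding stratum_sd_def Let_def assms(1) by (simp only: m)
  also have "sqrt (1/4) = (1/2::real)" by (simp add: real_sqrt_divide)
  finally show ?thesis .
qed

lemma positions_len: "stratum_positions xs i (length xs) = {k. k < length xs \<and> snd (xs ! k) = i}"
  by (auto simp: stratum_positions_def)

lemma card_positions: "card (stratum_positions xs i (length xs)) = length (filter (\<lambda>p. snd p = i) xs)"
  by (simp add: positions_len length_filter_conv_card)

lemma card_O: "i \<in> {1..r} \<Longrightarrow> card (stratum_positions (pre r M) i (r * M)) = M"
  using card_positions[of "pre r M" i] filter_pre[of i r M] by simp

lemma pos_xsj_t1: "stratum_positions (xsj r M j) j (r*M) = stratum_positions (pre r M) j (r*M)"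
  by (auto simp: stratum_positions_def xsj_def nth_append)

lemma pos_xsj_T: "stratum_positions (xsj r M j) j (r*M + M) = stratum_positions (pre r M) j (r*M) \<union> {r*M..<r*M+M}"
  by (auto simp: stratum_positions_def xsj_def nth_append)

lemma card_P: "j \<in> {1..r} \<Longrightarrow> card (stratum_positions (xsj r M j) j (r*M + M)) = 2 * M"
proof -
  assume j: "j \<in> {1..r}"
  have "finite (stratum_positions (pre r M) j (r*M))" by (simp add: stratum_positions_def)
  moreover have "stratum_positions (pre r M) j (r*M) \<inter> {r*M..<r*M+M} = {}"
    by (auto simp: stratum_positions_def)
  ultimately show ?thesis using card_O[OF j] pos_xsj_T[of r M j] by (simp add: card_Un_disjoint)
qed



lemma ns_xsj:
  assumes i: "i \<in> {1..r}" and j: "j \<in> {1..r}" and M: "M > 0"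
  shows "real (stratum_count (xsj r M j) i) * (stratum_sd (xsj r M j) i)^2 = (if i = j then real M / 2 else 0)"
    and "(real (stratum_count (xsj r M j) i))^2 * (stratum_sd (xsj r M j) i)^2 = (if i = j then (real M)^2 else 0)"
proof -
  note v = vals_xsj[OF i j, of M]
  have "stratum_count (xsj r M j) i = (if i = j then 2 * M else M)"
    using v by (simp add: stratum_count_def)
  moreover have "stratum_sd (xsj r M j) i = (if i = j then 1/2 else 0)"
    using v sd_half[of "xsj r M j" i M] sd_zero[of "xsj r M j" i M] M by (auto split: if_splits)
  ultimately show "real (stratum_count (xsj r M j) i) * (stratum_sd (xsj r M j) i)^2 = (if i = j then real M / 2 else 0)"
    and "(real (stratum_count (xsj r M j) i))^2 * (stratum_sd (xsj r M j) i)^2 = (if i = j then (real M)^2 else 0)"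
    by (auto simp: power2_eq_square)
qed

lemma srs_xsj:
  assumes j: "j \<in> {1..r}" and M: "M > 0"
  shows "srs_variance r (xsj r M j) s =
    (if s j = 0 then \<top> else ennreal ((1 / (real (r*M+M))^2) * ((real M)^2 / real (s j) - real M / 2)))"
proof -
  let ?xs = "xsj r M j"
  let ?ni = "\<lambda>i. real (stratum_count ?xs i)"
  let ?sg = "stratum_sd ?xs"
  have c1: "(\<exists>i\<in>{1..r}. s i = 0 \<and> ?ni i * (?sg i)^2 \<noteq> 0) \<longleftrightarrow> s j = 0"
    using ns_xsj(1)[OF _ j M] j M by auto
  have s1: "(\<Sum>i=1..r. (?ni i)^2 * (?sg i)^2 / real (s i)) = (real M)^2 / real (s j)"
  proof -
    have "(\<Sum>i=1..r. (?ni i)^2 * (?sg i)^2 / real (s i)) = (\<Sum>i=1..r. if i = j then (real M)^2 / real (s i) else 0)"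
      by (rule sum.cong[OF refl]) (simp add: ns_xsj(2)[OF _ j M])
    also have "\<dots> = (real M)^2 / real (s j)" using j by (simp add: sum.delta')
    finally show ?thesis .
  qed
  have s2: "(\<Sum>i=1..r. ?ni i * (?sg i)^2) = real M / 2"
  proof -
    have "(\<Sum>i=1..r. ?ni i * (?sg i)^2) = (\<Sum>i=1..r. if i = j then real M / 2 else 0)"
      by (rule sum.cong[OF refl]) (simp add: ns_xsj(1)[OF _ j M])
    also have "\<dots> = real M / 2" using j by (simp add: sum.delta')
    finally show ?thesis .
  qed
  show ?thesis
    unfolding srs_variance_def Let_def c1 s1 s2 by (simp add: right_diff_distrib)
qed

lemma opt_xsj:
  assumes j: "j \<in> {1..r}" and M: "M > 0"
  shows "opt_variance r M (xsj r M j) = ennreal ((1 / (real (r*M+M))^2) * (real M / 2))"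
proof -
  let ?K = "1 / (real (r*M+M))^2"
  let ?S = "{s. (\<forall>i\<in>{1..r}. s i \<le> stratum_count (xsj r M j) i) \<and> (\<Sum>i=1..r. s i) = M}"
  define s0 where "s0 i = (if i = j then M else 0)" for i :: nat
  have cnt: "stratum_count (xsj r M j) i = (if i = j then 2 * M else M)" if "i \<in> {1..r}" for i
    using vals_xsj[OF that j, of M] by (simp add: stratum_count_def)
  have s0S: "s0 \<in> ?S"
    using j cnt by (auto simp: s0_def sum.delta')
  have v0: "srs_variance r (xsj r M j) s0 = ennreal (?K * (real M / 2))"
    using M by (simp add: srs_xsj[OF j M] s0_def power2_eq_square)
  have lb: "ennreal (?K * (real M / 2)) \<le> srs_variance r (xsj r M j) s" if "s \<in> ?S" for s
  proof (cases "s j = 0")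
    case True then show ?thesis by (simp add: srs_xsj[OF j M])
  next
    case False
    have "s j \<le> (\<Sum>i=1..r. s i)" using j by (intro member_le_sum) auto
    then have sj: "s j \<le> M" using that by simp
    have "real M \<le> (real M)^2 / real (s j)"
      using sj False by (simp add: power2_eq_square field_simps)
    then have h: "real M / 2 \<le> (real M)^2 / real (s j) - real M / 2" by linarith
    have "?K * (real M / 2) \<le> ?K * ((real M)^2 / real (s j) - real M / 2)"
      by (rule mult_left_mono[OF h]) auto
    then show ?thesis using False by (simp add: srs_xsj[OF j M] ennreal_leI)
  qed
  show ?thesis
  proof (rule antisym)
    show "opt_variance r M (xsj r M j) \<le> ennreal (?K * (real M / 2))"
      unfolding opt_variance_def by (rule order_trans[OF INF_lower[OF s0S]]) (simp add: v0)
    show "ennreal (?K * (real M / 2)) \<le> opt_variance r M (xsj r M j)"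
      unfolding opt_variance_def by (rule INF_greatest) (rule lb)
  qed
qed



lemma pmf_integrable_bound:
  fixes f :: "'a \<Rightarrow> real"
  assumes "\<And>x. \<bar>f x\<bar> \<le> B"
  shows "integrable (measure_pmf p) f"
  by (rule measure_pmf.integrable_const_bound[where B=B]) (use assms in auto)

lemma nn_ge_int:
  fixes g :: "'a \<Rightarrow> real"
  assumes "integrable (measure_pmf p) g"
  shows "ennreal (measure_pmf.expectation p g) \<le> (\<integral>\<^sup>+x. ennreal (g x) \<partial>measure_pmf p)"
proof -
  have im: "integrable (measure_pmf p) (\<lambda>x. max 0 (g x))" using assms by auto
  have "measure_pmf.expectation p g \<le> measure_pmf.expectation p (\<lambda>x. max 0 (g x))"
    by (rule integral_mono[OF assms im]) auto
  then have "ennreal (measure_pmf.expectation p g) \<le> ennreal (measure_pmf.expectation p (\<lambda>x. max 0 (g x)))"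
    by (rule ennreal_leI)
  also have "\<dots> = (\<integral>\<^sup>+x. ennreal (max 0 (g x)) \<partial>measure_pmf p)"
    by (rule nn_integral_eq_integral[symmetric, OF im]) auto
  also have "\<dots> = (\<integral>\<^sup>+x. ennreal (g x) \<partial>measure_pmf p)"
    by (simp add: ennreal_max_0)
  finally show ?thesis .
qed

lemma recip_tangent:
  fixes s m :: real
  assumes "s > 0" "m > 0"
  shows "2 / m - s / m^2 \<le> 1 / s"
proof -
  have "1 / s - (2 / m - s / m^2) = (m - s)^2 / (s * m^2)"
    using assms by (simp add: field_simps power2_eq_square)
  moreover have "(m - s)^2 / (s * m^2) \<ge> 0" using assms by simp
  ultimately show ?thesis by linarith
qed

lemma alg_parts:
  assumes "stratified_streaming_alg r M A"
  shows alg1: "\<And>xs ys t. valid_stream r xs \<Longrightarrow> valid_stream r ys \<Longrightarrow> t \<le> length xs \<Longrightarrow> t \<le> length ys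
         \<Longrightarrow> take t xs = take t ys
         \<Longrightarrow> map_pmf (prefix_run t) (A xs) = map_pmf (prefix_run t) (A ys)"
    and alg2: "\<And>xs \<rho> t. valid_stream r xs \<Longrightarrow> \<rho> \<in> set_pmf (A xs) \<Longrightarrow> t \<le> length xs \<Longrightarrow>
            fst (\<rho> t) \<subseteq> {..<t} \<and> card (fst (\<rho> t)) \<le> M \<and>
            (t < length xs \<longrightarrow> fst (\<rho> (Suc t)) \<subseteq> fst (\<rho> t) \<union> {t}) \<and>
            (\<forall>i\<in>{1..r}. snd (\<rho> t) i \<subseteq> fst (\<rho> t) \<inter> stratum_positions xs i t)"
    and alg3: "\<And>xs t i B C. valid_stream r xs \<Longrightarrow> t \<le> length xs \<Longrightarrow> i \<in> {1..r} \<Longrightarrow>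
            B \<subseteq> stratum_positions xs i t \<Longrightarrow> C \<subseteq> stratum_positions xs i t \<Longrightarrow> card B = card C
            \<Longrightarrow> measure_pmf.prob (A xs) {\<rho>. snd (\<rho> t) i = B}
                = measure_pmf.prob (A xs) {\<rho>. snd (\<rho> t) i = C}"
  using assms unfolding stratified_streaming_alg_def by blast+

lemma stored_mono:
  assumes alg: "stratified_streaming_alg r M A" and v: "valid_stream r xs"
    and \<rho>: "\<rho> \<in> set_pmf (A xs)"
  shows "t1 \<le> t \<Longrightarrow> t \<le> length xs \<Longrightarrow> fst (\<rho> t) \<subseteq> fst (\<rho> t1) \<union> {t1..<t}"
proof (induction t)
  case 0 then show ?case by simp
next
  case (Suc t)
  show ?case
  proof (cases "t1 = Suc t")
    case True then show ?thesis by simp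
  next
    case False
    then have h: "t1 \<le> t" "t < length xs" using Suc.prems by auto
    have "fst (\<rho> (Suc t)) \<subseteq> fst (\<rho> t) \<union> {t}"
      using alg2[OF alg v \<rho>, of t] h by auto
    then show ?thesis using Suc.IH h by fastforce
  qed
qed



lemma main:
  assumes r2: "2 \<le> r" and rM: "r < M" and alg: "stratified_streaming_alg r M A"
  shows "\<exists>xs. valid_stream r xs \<and>
              0 < opt_variance r M xs \<and> opt_variance r M xs < \<top> \<and>
              (\<integral>\<^sup>+ \<rho>. alg_variance r xs \<rho> \<partial>measure_pmf (A xs))
                \<ge> ennreal ((1/4) * real r) * opt_variance r M xs"
proof -
  have M: "M > 0" using r2 rM by simp
  define pr where "pr = pre r M"
  define t1 where "t1 = r * M"
  define Ob where "Ob i = stratum_positions pr i t1" for i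
  define e where "e i = measure_pmf.expectation (A pr) (\<lambda>\<rho>. real (card (fst (\<rho> t1) \<inter> Ob i)))" for i
  have lpr: "length pr = t1" by (simp add: pr_def t1_def)
  have vpr: "valid_stream r pr" by (simp add: pr_def valid_pre)
  have ObT: "Ob i \<subseteq> {..<t1}" for i by (auto simp: Ob_def stratum_positions_def)
  have finO: "finite (Ob i)" for i using ObT finite_subset by blast
  have int_e: "integrable (measure_pmf (A pr)) (\<lambda>\<rho>. real (card (fst (\<rho> t1) \<inter> Ob i)))" for i
    by (rule pmf_integrable_bound[where B="real (card (Ob i))"])
       (simp add: card_mono finO)
  have sum_e: "(\<Sum>i=1..r. e i) \<le> real M"
  proof -
    have "(\<Sum>i=1..r. e i) = measure_pmf.expectation (A pr) (\<lambda>\<rho>. \<Sum>i=1..r. real (card (fst (\<rho> t1) \<inter> Ob i)))"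
      unfolding e_def by (rule Bochner_Integration.integral_sum[symmetric]) (rule int_e)
    also have "\<dots> \<le> measure_pmf.expectation (A pr) (\<lambda>\<rho>. real M)"
    proof (rule integral_mono_AE)
      show "integrable (measure_pmf (A pr)) (\<lambda>\<rho>. \<Sum>i=1..r. real (card (fst (\<rho> t1) \<inter> Ob i)))"
        using int_e by auto
      show "integrable (measure_pmf (A pr)) (\<lambda>\<rho>. real M)" by simp
      show "AE \<rho> in measure_pmf (A pr). (\<Sum>i=1..r. real (card (fst (\<rho> t1) \<inter> Ob i))) \<le> real M"
      proof (rule AE_pmfI)
        fix \<rho> assume \<rho>: "\<rho> \<in> set_pmf (A pr)"
        have st: "fst (\<rho> t1) \<subseteq> {..<t1}" "card (fst (\<rho> t1)) \<le> M"
          using alg2[OF alg vpr \<rho>, of t1] lpr by auto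
        have finF: "finite (fst (\<rho> t1))" using st finite_subset by blast
        have disj: "\<forall>i\<in>{1..r}. \<forall>i'\<in>{1..r}. i \<noteq> i' \<longrightarrow> (fst (\<rho> t1) \<inter> Ob i) \<inter> (fst (\<rho> t1) \<inter> Ob i') = {}"
          by (auto simp: Ob_def stratum_positions_def)
        have "(\<Sum>i=1..r. card (fst (\<rho> t1) \<inter> Ob i)) = card (\<Union>i\<in>{1..r}. fst (\<rho> t1) \<inter> Ob i)"
          by (rule card_UN_disjoint[symmetric]) (use finF disj in auto)
        also have "\<dots> \<le> card (fst (\<rho> t1))" by (rule card_mono[OF finF]) auto
        finally have "(\<Sum>i=1..r. card (fst (\<rho> t1) \<inter> Ob i)) \<le> M" using st by linarith
        then show "(\<Sum>i=1..r. real (card (fst (\<rho> t1) \<inter> Ob i))) \<le> real M"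
          by (metis of_nat_le_iff of_nat_sum)
      qed
    qed
    also have "\<dots> = real M" by simp
    finally show ?thesis .
  qed
  obtain j where j: "j \<in> {1..r}" and ej: "e j \<le> real M / real r"
  proof (rule ccontr)
    assume "\<not> thesis"
    then have lt: "\<forall>j\<in>{1..r}. real M / real r < e j" using that by force
    have "(\<Sum>i=1..r. real M / real r) < (\<Sum>i=1..r. e i)"
      by (rule sum_strict_mono) (use lt r2 in auto)
    then show False using sum_e r2 by simp
  qed
  define X where "X = xsj r M j"
  define T where "T = r * M + M"
  have lX: "length X = T" by (simp add: X_def T_def)
  have vX: "valid_stream r X" using valid_xsj[OF j] by (simp add: X_def)
  define S where "S \<rho> = snd (\<rho> T) j" for \<rho> :: run
  define P where "P = stratum_positions X j T"
  have PO: "P = Ob j \<union> {t1..<T}"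
    using pos_xsj_T[of r M j] by (simp add: P_def X_def Ob_def pr_def t1_def T_def)
  have ObP: "Ob j \<subseteq> P" using PO by auto
  have finP: "finite P" by (simp add: P_def stratum_positions_def)
  have cP: "card P = 2 * M" using card_P[OF j, of M] by (simp add: P_def X_def T_def)
  have cO: "card (Ob j) = M" using card_O[OF j, of M] by (simp add: Ob_def pr_def t1_def)
  have SP: "S \<rho> \<subseteq> P" "S \<rho> \<subseteq> fst (\<rho> T)" if "\<rho> \<in> set_pmf (A X)" for \<rho>
    using alg2[OF alg vX that, of T] j lX by (auto simp: S_def P_def)
  have stor: "fst (\<rho> T) \<subseteq> fst (\<rho> t1) \<union> {t1..<T}" if "\<rho> \<in> set_pmf (A X)" for \<rho>
    by (rule stored_mono[OF alg vX that]) (auto simp: lX t1_def T_def)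
  define E1 where "E1 = measure_pmf.expectation (A X) (\<lambda>\<rho>. real (card (S \<rho>)))"
  define E2 where "E2 = measure_pmf.expectation (A X) (\<lambda>\<rho>. real (card (S \<rho> \<inter> Ob j)))"
  have E2e: "E2 \<le> e j"
  proof -
    have "E2 \<le> measure_pmf.expectation (A X) (\<lambda>\<rho>. real (card (fst (\<rho> t1) \<inter> Ob j)))"
      unfolding E2_def
    proof (rule integral_mono_AE)
      show "integrable (measure_pmf (A X)) (\<lambda>\<rho>. real (card (S \<rho> \<inter> Ob j)))"
        by (rule pmf_integrable_bound[where B="real (card (Ob j))"]) (simp add: card_mono finO)
      show "integrable (measure_pmf (A X)) (\<lambda>\<rho>. real (card (fst (\<rho> t1) \<inter> Ob j)))"
        by (rule pmf_integrable_bound[where B="real (card (Ob j))"]) (simp add: card_mono finO)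
      show "AE \<rho> in measure_pmf (A X). real (card (S \<rho> \<inter> Ob j)) \<le> real (card (fst (\<rho> t1) \<inter> Ob j))"
      proof (rule AE_pmfI)
        fix \<rho> assume \<rho>: "\<rho> \<in> set_pmf (A X)"
        have "S \<rho> \<inter> Ob j \<subseteq> fst (\<rho> t1) \<inter> Ob j"
          proof
          fix x assume x: "x \<in> S \<rho> \<inter> Ob j"
          then have "x \<in> fst (\<rho> t1) \<union> {t1..<T}" using SP(2)[OF \<rho>] stor[OF \<rho>] by blast
          moreover have "x < t1" using x ObT[of j] by auto
          ultimately show "x \<in> fst (\<rho> t1) \<inter> Ob j" using x by auto
        qed
        then show "real (card (S \<rho> \<inter> Ob j)) \<le> real (card (fst (\<rho> t1) \<inter> Ob j))"
          by (simp add: card_mono finO)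
      qed
    qed
    also have "\<dots> = measure_pmf.expectation (map_pmf (prefix_run t1) (A X)) (\<lambda>\<rho>. real (card (fst (\<rho> t1) \<inter> Ob j)))"
      by (simp add: prefix_run_def)
    also have "map_pmf (prefix_run t1) (A X) = map_pmf (prefix_run t1) (A pr)"
      by (rule alg1[OF alg vX vpr]) (auto simp: lX lpr T_def t1_def X_def xsj_def pr_def)
    also have "measure_pmf.expectation (map_pmf (prefix_run t1) (A pr)) (\<lambda>\<rho>. real (card (fst (\<rho> t1) \<inter> Ob j))) = e j"
      by (simp add: prefix_run_def e_def)
    finally show ?thesis .
  qed
  define Q where "Q = map_pmf S (A X)"
  have suppQ: "B \<in> Pow P" if "B \<in> set_pmf Q" for B
    using that SP(1) by (auto simp: Q_def)
  have E1s: "E1 = (\<Sum>B\<in>Pow P. pmf Q B * real (card B))"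
  proof -
    have "E1 = measure_pmf.expectation Q (\<lambda>B. real (card B))" by (simp add: E1_def Q_def)
    also have "\<dots> = (\<Sum>B\<in>Pow P. real (card B) * pmf Q B)"
      by (rule integral_measure_pmf_real) (use finP suppQ in auto)
    finally show ?thesis by (simp add: mult.commute)
  qed
  have E2s: "E2 = (\<Sum>B\<in>Pow P. pmf Q B * real (card (B \<inter> Ob j)))"
  proof -
    have "E2 = measure_pmf.expectation Q (\<lambda>B. real (card (B \<inter> Ob j)))" by (simp add: E2_def Q_def)
    also have "\<dots> = (\<Sum>B\<in>Pow P. real (card (B \<inter> Ob j)) * pmf Q B)"
      by (rule integral_measure_pmf_real) (use finP suppQ in auto)
    finally show ?thesis by (simp add: mult.commute)
  qed
  have qinv: "pmf Q B = pmf Q C" if "B \<subseteq> P" "C \<subseteq> P" "card B = card C" for B C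
  proof -
    have "pmf Q B = measure_pmf.prob (A X) {\<rho>. snd (\<rho> T) j = B}"
      by (simp add: Q_def pmf_map S_def vimage_def)
    also have "\<dots> = measure_pmf.prob (A X) {\<rho>. snd (\<rho> T) j = C}"
      by (rule alg3[OF alg vX _ j]) (use that in \<open>auto simp: lX P_def\<close>)
    also have "\<dots> = pmf Q C"
      by (simp add: Q_def pmf_map S_def vimage_def)
    finally show ?thesis .
  qed
  have "real (card P) * E2 = real (card (Ob j)) * E1"
    unfolding E1s E2s by (rule comb_lemma[OF finP ObP qinv])
  then have E12: "E1 = 2 * E2" using cP cO M by simp
  have E1b: "E1 \<le> 2 * real M / real r" using E12 E2e ej by simp
  define K where "K = 1 / (real (r*M+M))^2"
  have Kp: "K > 0"
  proof -
    have "real (r*M+M) > 0" using M by linarith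
    then show ?thesis unfolding K_def by simp
  qed
  define m where "m = 2 * real M / real r"
  have mp: "m > 0" using M r2 by (simp add: m_def)
  define \<alpha> where "\<alpha> = K * (2 * (real M)^2 / m - real M / 2)"
  define \<beta> where "\<beta> = K * (real M)^2 / m^2"
  define g where "g \<rho> = \<alpha> - \<beta> * real (card (S \<rho>))" for \<rho> :: run
  have intS: "integrable (measure_pmf (A X)) (\<lambda>\<rho>. real (card (S \<rho>)))"
  proof (rule measure_pmf.integrable_const_bound[where B="real (card P)"])
    show "AE \<rho> in measure_pmf (A X). norm (real (card (S \<rho>))) \<le> real (card P)"
      by (rule AE_pmfI) (use SP finP in \<open>auto intro: card_mono\<close>)
  qed simp
  have intg: "integrable (measure_pmf (A X)) g" unfolding g_def using intS by auto
  have Eg: "measure_pmf.expectation (A X) g = \<alpha> - \<beta> * E1"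
    unfolding g_def E1_def using intS by simp
  have bp: "\<beta> \<ge> 0" using Kp by (simp add: \<beta>_def)
  have "\<alpha> - \<beta> * E1 \<ge> \<alpha> - \<beta> * m" using mult_left_mono[OF E1b bp] by (simp add: m_def)
  moreover have "\<alpha> - \<beta> * m = K * (real r * real M / 2 - real M / 2)"
    using mp M r2 by (simp add: \<alpha>_def \<beta>_def m_def field_simps power2_eq_square)
  ultimately have Eg2: "measure_pmf.expectation (A X) g \<ge> K * (real r * real M / 2 - real M / 2)"
    using Eg by simp
  have pw: "ennreal (g \<rho>) \<le> alg_variance r X \<rho>" for \<rho>
  proof (cases "card (S \<rho>) = 0")
    case True
    then show ?thesis using srs_xsj[OF j M] by (simp add: alg_variance_def X_def S_def T_def)
  next
    case False
    let ?s = "real (card (S \<rho>))"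
    have sp: "?s > 0" using False by simp
    have "2 / m - ?s / m^2 \<le> 1 / ?s" by (rule recip_tangent[OF sp mp])
    then have "(real M)^2 * (2 / m - ?s / m^2) \<le> (real M)^2 * (1 / ?s)"
      by (rule mult_left_mono) simp
    moreover have "(real M)^2 * (2 / m - ?s / m^2) = 2 * (real M)^2 / m - (real M)^2 / m^2 * ?s"
      by (simp add: right_diff_distrib)
    moreover have "(real M)^2 * (1 / ?s) = (real M)^2 / ?s" by simp
    ultimately have "2 * (real M)^2 / m - (real M)^2 / m^2 * ?s - real M / 2 \<le> (real M)^2 / ?s - real M / 2"
      by linarith
    then have "K * (2 * (real M)^2 / m - (real M)^2 / m^2 * ?s - real M / 2) \<le> K * ((real M)^2 / ?s - real M / 2)"
      by (rule mult_left_mono) (use Kp in simp)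
    moreover have "g \<rho> = K * (2 * (real M)^2 / m - (real M)^2 / m^2 * ?s - real M / 2)"
      by (simp add: g_def \<alpha>_def \<beta>_def algebra_simps)
    ultimately have "g \<rho> \<le> K * ((real M)^2 / ?s - real M / 2)" by simp
    then show ?thesis using False srs_xsj[OF j M]
      by (simp add: alg_variance_def X_def S_def T_def K_def ennreal_leI)
  qed
  have opt: "opt_variance r M X = ennreal (K * (real M / 2))"
    using opt_xsj[OF j M] by (simp add: X_def K_def)
  have "ennreal ((1/4) * real r) * opt_variance r M X = ennreal ((1/4) * real r * (K * (real M / 2)))"
    unfolding opt by (simp add: ennreal_mult'[symmetric])
  also have "\<dots> \<le> ennreal (K * (real r * real M / 2 - real M / 2))"
  proof (rule ennreal_leI)
    have a: "2 * real M \<le> real r * real M" using r2 by (intro mult_right_mono) auto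
    then have h: "(1/4) * real r * (real M / 2) \<le> (real r * real M / 2 - real M / 2)" by linarith
    have ineq: "K * ((1/4) * real r * (real M / 2)) \<le> K * (real r * real M / 2 - real M / 2)"
      by (rule mult_left_mono[OF h]) (use Kp in simp)
    have eq: "(1/4) * real r * (K * (real M / 2)) = K * ((1/4) * real r * (real M / 2))"
      by (simp add: algebra_simps)
    show "(1/4) * real r * (K * (real M / 2)) \<le> K * (real r * real M / 2 - real M / 2)"
      by (subst eq) (rule ineq)
  qed
  also have "\<dots> \<le> ennreal (measure_pmf.expectation (A X) g)" by (rule ennreal_leI[OF Eg2])
  also have "\<dots> \<le> (\<integral>\<^sup>+\<rho>. ennreal (g \<rho>) \<partial>measure_pmf (A X))" by (rule nn_ge_int[OF intg])
  also have "\<dots> \<le> (\<integral>\<^sup>+\<rho>. alg_variance r X \<rho> \<partial>measure_pmf (A X))"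
    by (rule nn_integral_mono) (rule pw)
  finally have fin: "ennreal ((1/4) * real r) * opt_variance r M X \<le> (\<integral>\<^sup>+\<rho>. alg_variance r X \<rho> \<partial>measure_pmf (A X))" .
  show ?thesis
    by (rule exI[of _ X]) (use vX fin opt Kp M in auto)
qed


theorem theorem4:
  shows "\<exists>c::real. c > 0 \<and>
    (\<forall>r M::nat. 2 \<le> r \<and> r < M \<longrightarrow>
      (\<forall>A. stratified_streaming_alg r M A \<longrightarrow>
        (\<exists>xs. valid_stream r xs \<and>
              0 < opt_variance r M xs \<and> opt_variance r M xs < \<top> \<and>
              (\<integral>\<^sup>+ \<rho>. alg_variance r xs \<rho> \<partial>measure_pmf (A xs))
                \<ge> ennreal (c * real r) * opt_variance r M xs)))"
proof (rule exI[of _ "1/4"], intro conjI allI impI)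
  show "(0::real) < 1/4" by simp
next
  fix r M :: nat and A
  assume h: "2 \<le> r \<and> r < M" and alg: "stratified_streaming_alg r M A"
  show "\<exists>xs. valid_stream r xs \<and>
              0 < opt_variance r M xs \<and> opt_variance r M xs < \<top> \<and>
              (\<integral>\<^sup>+ \<rho>. alg_variance r xs \<rho> \<partial>measure_pmf (A xs))
                \<ge> ennreal ((1/4) * real r) * opt_variance r M xs"
    using main[OF _ _ alg] h by blast
qed

end
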